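(* Let $w_1,w_2\ge2$ be even. The $\mathbb Q$-linear map $(W_{w_1}^{\mathbb Q}\otimes1)\times V_{w_1,w_2}^{\mathbb Q}[I_D]\times(X_1^{w_1}\otimes W_{w_2}^{\mathbb Q})\to E_{w_1,w_2}^{\mathbb Q}$, $(P_H,P_D,P_V)\mapsto P_H-P_D+P_V$, is surjective and its kernel is the line spanned by $\big(1-X_1^{w_1},\,1-X_1^{w_1}X_2^{w_2},\,X_1^{w_1}(1-X_2^{w_2})\big)$. Consequently $\dim E_{w_1,w_2}^{\mathbb Q}=\dim W_{w_1}^{\mathbb Q}+\dim V_{w_1,w_2}^{\mathbb Q}[I_D]+\dim W_{w_2}^{\mathbb Q}-1$.
   Context: $\Gamma=PSL_2(\mathbb Z)$, $S=\pm\begin{pmatrix}0&-1\\1&0\end{pmatrix}$, $U=\pm\begin{pmatrix}0&1\\-1&1\end{pmatrix}$. For even $w$, $V_w^{\mathbb Q}$ is the space of rational polynomials of degree $\le w$ with action $\gamma.P(X)=(-cX+a)^wP\big(\frac{dX-b}{-cX+a}\big)$ for $\gamma=\pm\begin{pmatrix}a&b\\c&d\end{pmatrix}$; $W_w^{\mathbb Q}=\{P\in V_w^{\mathbb Q}:(1+S).P=(1+U+U^2).P=0\}$. $V_{w_1,w_2}^{\mathbb Q}$ is the space of rational polynomials in $X_1,X_2$ with $\deg_{X_j}\le w_j$ with diagonal action $(\gamma_1,\gamma_2).P(X_1,X_2)=(-c_1X_1+a_1)^{w_1}(-c_2X_2+a_2)^{w_2}P\big(\frac{d_1X_1-b_1}{-c_1X_1+a_1},\frac{d_2X_2-b_2}{-c_2X_2+a_2}\big)$.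 $V_{w_1,w_2}^{\mathbb Q}[I_D]=\{P:[(1,1)+(S,S)].P=[(1,1)+(U,U)+(U^2,U^2)].P=0\}$; $W_{w_1}^{\mathbb Q}\otimes1=\{P(X_1):P\in W_{w_1}^{\mathbb Q}\}$; $X_1^{w_1}\otimes W_{w_2}^{\mathbb Q}=\{X_1^{w_1}Q(X_2):Q\in W_{w_2}^{\mathbb Q}\}$; $E_{w_1,w_2}^{\mathbb Q}=(W_{w_1}^{\mathbb Q}\otimes1)+V_{w_1,w_2}^{\mathbb Q}[I_D]+(X_1^{w_1}\otimes W_{w_2}^{\mathbb Q})$. *)

theory Defs
  imports "HOL-Computational_Algebra.Polynomial"
begin

text \<open>Elements of PSL2(Z) are represented by integer matrices (a,b,c,d), meaning
  the class of +-[[a,b],[c,d]]. Since all weights are even, the sign is irrelevant.\<close>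

type_synonym mat2 = "int \<times> int \<times> int \<times> int"

definition mmul :: "mat2 \<Rightarrow> mat2 \<Rightarrow> mat2" where
  "mmul m n = (case m of (a,b,c,d) \<Rightarrow> case n of (a',b',c',d') \<Rightarrow>
     (a*a' + b*c', a*b' + b*d', c*a' + d*c', c*b' + d*d'))"

definition matS :: mat2 where "matS = (0, -1, 1, 0)"
definition matU :: mat2 where "matU = (0, 1, -1, 1)"
definition matU2 :: mat2 where "matU2 = mmul matU matU"

text \<open>The factor (dX - b)^k (-cX + a)^(w-k), as a rational polynomial in one variable.
  For P of degree at most w, gamma.P(X) = (-cX+a)^w P((dX-b)/(-cX+a))
  = sum over k of p_k (dX-b)^k (-cX+a)^(w-k).\<close>
definition mfac :: "nat \<Rightarrow> mat2 \<Rightarrow> nat \<Rightarrow> rat poly" where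
  "mfac w g k = (case g of (a,b,c,d) \<Rightarrow>
     [:- of_int b, of_int d:] ^ k * [:of_int a, - of_int c:] ^ (w - k))"

definition act1 :: "nat \<Rightarrow> mat2 \<Rightarrow> rat poly \<Rightarrow> rat poly" where
  "act1 w g P = (\<Sum>k\<le>w. smult (coeff P k) (mfac w g k))"

definition Vw :: "nat \<Rightarrow> rat poly set" where
  "Vw w = {P. degree P \<le> w}"

definition Ww :: "nat \<Rightarrow> rat poly set" where
  "Ww w = {P \<in> Vw w. P + act1 w matS P = 0 \<and>
                      P + act1 w matU P + act1 w matU2 P = 0}"

text \<open>Two-variable polynomials in X1, X2 are represented as elements of
  rat poly poly: the outer variable is X2, the coefficients are polynomials in X1.\<close>

definition lift2 :: "rat poly \<Rightarrow> rat poly poly" where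
  "lift2 g = map_poly (\<lambda>x. [:x:]) g"

definition qscale :: "rat \<Rightarrow> rat poly poly \<Rightarrow> rat poly poly" where
  "qscale r P = smult [:r:] P"

definition V2 :: "nat \<Rightarrow> nat \<Rightarrow> rat poly poly set" where
  "V2 w1 w2 = {P. degree P \<le> w2 \<and> (\<forall>j. degree (coeff P j) \<le> w1)}"

definition act2 :: "nat \<Rightarrow> nat \<Rightarrow> mat2 \<Rightarrow> mat2 \<Rightarrow> rat poly poly \<Rightarrow> rat poly poly" where
  "act2 w1 w2 g1 g2 P =
     (\<Sum>i\<le>w1. \<Sum>j\<le>w2. qscale (coeff (coeff P j) i) ([:mfac w1 g1 i:] * lift2 (mfac w2 g2 j)))"

definition VID :: "nat \<Rightarrow> nat \<Rightarrow> rat poly poly set" where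
  "VID w1 w2 = {P \<in> V2 w1 w2. P + act2 w1 w2 matS matS P = 0 \<and>
       P + act2 w1 w2 matU matU P + act2 w1 w2 matU2 matU2 P = 0}"

definition WH :: "nat \<Rightarrow> rat poly poly set" where
  "WH w1 = {[:P:] | P. P \<in> Ww w1}"

definition WV :: "nat \<Rightarrow> nat \<Rightarrow> rat poly poly set" where
  "WV w1 w2 = {[:monom 1 w1:] * lift2 Q | Q. Q \<in> Ww w2}"

definition Ew :: "nat \<Rightarrow> nat \<Rightarrow> rat poly poly set" where
  "Ew w1 w2 = {PH + PD + PV | PH PD PV. PH \<in> WH w1 \<and> PD \<in> VID w1 w2 \<and> PV \<in> WV w1 w2}"

end

theory Submission
  imports Defs
begin

lemma vsP: "vector_space (smult :: rat \<Rightarrow> rat poly \<Rightarrow> rat poly)"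
  by unfold_locales (auto simp: smult_add_right smult_add_left)

interpretation P: vector_space "smult :: rat \<Rightarrow> rat poly \<Rightarrow> rat poly"
  by (rule vsP)

lemma qscale_pCons_add: "[:a + b:] = [:a:] + ([:b:] :: rat poly)" by simp

lemma vsQ: "vector_space qscale"
proof
  fix a b :: rat and x y :: "rat poly poly"
  show "qscale a (x + y) = qscale a x + qscale a y" by (simp add: qscale_def smult_add_right)
  show "qscale (a + b) x = qscale a x + qscale b x"
    by (simp add: qscale_def flip: smult_add_left)
  show "qscale a (qscale b x) = qscale (a * b) x" by (simp add: qscale_def mult.commute)
  show "qscale 1 x = x" by (simp add: qscale_def one_pCons[symmetric] del: one_pCons)
qed

interpretation Q: vector_space qscale by (rule vsQ)

lemma qscale_mult_left: "qscale r (x * y) = qscale r x * y"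
  by (simp add: qscale_def)

lemma coeff_lift2[simp]: "coeff (lift2 g) n = [:coeff g n:]"
  by (simp add: lift2_def coeff_map_poly)

lemma lift2_add[simp]: "lift2 (p + q) = lift2 p + lift2 q"
  by (rule poly_eqI) simp
lemma lift2_diff[simp]: "lift2 (p - q) = lift2 p - lift2 q"
  by (rule poly_eqI) simp
lemma lift2_minus[simp]: "lift2 (- p) = - lift2 p"
  by (rule poly_eqI) simp
lemma lift2_0[simp]: "lift2 0 = 0"
  by (rule poly_eqI) simp
lemma lift2_1[simp]: "lift2 1 = 1"
  by (rule poly_eqI) (simp add: coeff_1)
lemma lift2_smult[simp]: "lift2 (smult c p) = smult [:c:] (lift2 p)"
  by (rule poly_eqI) simp
lemma lift2_monom[simp]: "lift2 (monom c n) = monom [:c:] n"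
  by (rule poly_eqI) (simp add: coeff_monom)
lemma lift2_inj: "lift2 p = lift2 q \<Longrightarrow> p = q"
  by (metis coeff_lift2 pCons_eq_iff poly_eqI)
lemma lift2_sum: "lift2 (sum f A) = (\<Sum>x\<in>A. lift2 (f x))"
  by (induct A rule: infinite_finite_induct) auto

lemma smult_sum_right: "smult a (sum f A) = (\<Sum>x\<in>A. smult a (f x))"
  by (induct A rule: infinite_finite_induct) (auto simp: smult_add_right)

lemma act1_add: "act1 w g (P + Q) = act1 w g P + act1 w g Q"
  by (simp add: act1_def smult_add_left sum.distrib)
lemma act1_smult: "act1 w g (smult r P) = smult r (act1 w g P)"
  by (simp add: act1_def smult_sum_right smult_smult)
lemma act1_minus: "act1 w g (- P) = - act1 w g P"
  by (simp add: act1_def sum_negf)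
lemma act1_diff: "act1 w g (P - Q) = act1 w g P - act1 w g Q"
  by (simp add: act1_def smult_diff_left sum_subtractf)
lemma act1_0: "act1 w g 0 = 0"
  by (simp add: act1_def)
lemma act1_one: "act1 w g 1 = mfac w g 0"
proof -
  have "act1 w g 1 = (\<Sum>k\<le>w. if k = 0 then mfac w g k else 0)"
    unfolding act1_def by (intro sum.cong) (auto simp: coeff_1)
  then show ?thesis by simp
qed
lemma act1_monom: "act1 w g (monom 1 w) = mfac w g w"
proof -
  have "act1 w g (monom 1 w) = (\<Sum>k\<le>w. if k = w then mfac w g k else 0)"
    unfolding act1_def by (intro sum.cong) (auto simp: coeff_monom)
  then show ?thesis by simp
qed

lemma act2_add: "act2 w1 w2 g1 g2 (P + Q) = act2 w1 w2 g1 g2 P + act2 w1 w2 g1 g2 Q"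
  by (simp add: act2_def qscale_def smult_add_left sum.distrib)
lemma act2_qscale: "act2 w1 w2 g1 g2 (qscale r P) = qscale r (act2 w1 w2 g1 g2 P)"
  by (simp add: act2_def qscale_def smult_sum_right smult_smult coeff_smult mult.commute)
lemma act2_minus: "act2 w1 w2 g1 g2 (- P) = - act2 w1 w2 g1 g2 P"
  by (simp add: act2_def qscale_def sum_negf)
lemma act2_diff: "act2 w1 w2 g1 g2 (P - Q) = act2 w1 w2 g1 g2 P - act2 w1 w2 g1 g2 Q"
  by (simp add: act2_def qscale_def smult_diff_left sum_subtractf)

lemma pC_sum: "[:sum f A:] = (\<Sum>x\<in>A. [:f x:])"
  by (rule poly_eqI) (simp add: coeff_sum coeff_pCons split: nat.split)

lemma act2_tensor:
  "act2 w1 w2 g1 g2 ([:A:] * lift2 B) = [:act1 w1 g1 A:] * lift2 (act1 w2 g2 B)"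
proof -
  have "[:act1 w1 g1 A:] * lift2 (act1 w2 g2 B)
     = (\<Sum>i\<le>w1. [:smult (coeff A i) (mfac w1 g1 i):]) * (\<Sum>j\<le>w2. lift2 (smult (coeff B j) (mfac w2 g2 j)))"
    by (simp only: act1_def lift2_sum pC_sum)
  also have "\<dots> = (\<Sum>i\<le>w1. \<Sum>j\<le>w2. [:smult (coeff A i) (mfac w1 g1 i):] * lift2 (smult (coeff B j) (mfac w2 g2 j)))"
    by (simp add: sum_product)
  also have "\<dots> = act2 w1 w2 g1 g2 ([:A:] * lift2 B)"
    unfolding act2_def qscale_def
    by (intro sum.cong refl) (simp add: mult_smult_left mult_smult_right smult_smult mult.commute)
  finally show ?thesis ..
qed

lemma matU2_eq: "matU2 = (-1, 1, -1, 0)"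
  by (simp add: matU2_def matU_def mmul_def)

lemma pC1: "[:1:] = (1::'a::comm_ring_1 poly)" by simp
lemma pCm1: "[:-1:] = (-1::rat poly)" by (metis minus_pCons minus_zero pC1)
lemma pCmX: "[:0, -1:] = - [:0, 1::rat:]" by simp

lemma X_pow: "monom (1::rat) w = [:0, 1:] ^ w"
  by (simp add: monom_altdef)

lemma mfac_S0: "even w \<Longrightarrow> mfac w matS 0 = monom 1 w"
proof -
  assume "even w"
  have "[:0, -1:] ^ w = [:0, 1::rat:] ^ w" using \<open>even w\<close> by (simp only: pCmX Parity.power_minus_even)
  then show ?thesis by (simp add: mfac_def matS_def X_pow)
qed
lemma mfac_Sw: "mfac w matS w = 1"
  by (simp add: mfac_def matS_def pC1)
lemma mfac_U0: "mfac w matU 0 = monom 1 w"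
  by (simp add: mfac_def matU_def X_pow)
lemma mfac_Uw: "mfac w matU w = [:-1, 1:] ^ w"
  by (simp add: mfac_def matU_def)
lemma mfac_U20: "mfac w matU2 0 = [:-1, 1:] ^ w"
  by (simp add: mfac_def matU2_eq)
lemma mfac_U2w: "even w \<Longrightarrow> mfac w matU2 w = 1"
proof -
  assume "even w"
  have "[:-1:] ^ w = (1 :: rat poly)" using \<open>even w\<close> by (simp only: pCm1 neg_one_even_power)
  then show ?thesis by (simp add: mfac_def matU2_eq)
qed

lemmas act_simps = act1_one act1_monom mfac_S0 mfac_Sw mfac_U0 mfac_Uw mfac_U20 mfac_U2w

lemma q0_in_W:
  assumes "even w" "w \<ge> 1"
  shows "1 - monom 1 w \<in> Ww w"
  using assms by (simp add: Ww_def Vw_def act1_diff act_simps degree_monom_eq)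
    (metis degree_1 degree_diff_le degree_monom_le le0 max.absorb2 order_trans)

lemma pC_mult_lift2: "[:A:] * lift2 B = smult A (lift2 B)" by simp

lemma coeff_tensor: "coeff ([:A:] * lift2 B) j = smult (coeff B j) A"
  by (simp add: mult.commute[of A])

lemma V2_tensor:
  assumes "degree A \<le> w1" "degree B \<le> w2"
  shows "[:A:] * lift2 B \<in> V2 w1 w2"
proof -
  have "degree (lift2 B) \<le> degree B" unfolding lift2_def by (simp add: degree_map_poly)
  then have "degree ([:A:] * lift2 B) \<le> w2"
    using assms(2) by (metis degree_smult_le order_trans pC_mult_lift2)
  moreover have "degree (coeff ([:A:] * lift2 B) j) \<le> w1" for j
    using assms(1) unfolding coeff_tensor by (metis degree_smult_le order_trans)
  ultimately show ?thesis by (simp add: V2_def)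
qed

lemma V2_add: "P \<in> V2 w1 w2 \<Longrightarrow> Q \<in> V2 w1 w2 \<Longrightarrow> P + Q \<in> V2 w1 w2"
  unfolding V2_def by (auto intro: degree_add_le order_trans[OF degree_add_le])
lemma V2_minus: "P \<in> V2 w1 w2 \<Longrightarrow> - P \<in> V2 w1 w2"
  unfolding V2_def by auto
lemma V2_diff: "P \<in> V2 w1 w2 \<Longrightarrow> Q \<in> V2 w1 w2 \<Longrightarrow> P - Q \<in> V2 w1 w2"
  using V2_add[of P w1 w2 "-Q"] V2_minus[of Q] by simp
lemma V2_qscale: "P \<in> V2 w1 w2 \<Longrightarrow> qscale r P \<in> V2 w1 w2"
  unfolding V2_def qscale_def
  by (auto simp: coeff_smult)

lemma VID_add: "P \<in> VID w1 w2 \<Longrightarrow> Q \<in> VID w1 w2 \<Longrightarrow> P + Q \<in> VID w1 w2"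
  unfolding VID_def by (auto simp: V2_add act2_add algebra_simps)

lemma VID_minus: "P \<in> VID w1 w2 \<Longrightarrow> - P \<in> VID w1 w2"
  unfolding VID_def by (auto simp: V2_minus act2_minus)
lemma VID_qscale: "P \<in> VID w1 w2 \<Longrightarrow> qscale r P \<in> VID w1 w2"
  unfolding VID_def by (auto simp: V2_qscale act2_qscale simp flip: Q.scale_right_distrib)
lemma VID_0: "0 \<in> VID w1 w2"
  by (simp add: VID_def V2_def act2_def qscale_def)

lemma W_add: "P \<in> Ww w \<Longrightarrow> Q \<in> Ww w \<Longrightarrow> P + Q \<in> Ww w"
  unfolding Ww_def Vw_def by (auto simp: act1_add algebra_simps intro: order_trans[OF degree_add_le])
lemma W_minus: "P \<in> Ww w \<Longrightarrow> - P \<in> Ww w"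
  unfolding Ww_def Vw_def by (auto simp: act1_minus)
lemma W_smult: "P \<in> Ww w \<Longrightarrow> smult r P \<in> Ww w"
  unfolding Ww_def Vw_def by (auto simp: act1_smult simp flip: smult_add_right)
lemma W_0: "0 \<in> Ww w"
  by (simp add: Ww_def Vw_def act1_0)

lemma monom_M: "monom (M::rat poly) n = [:M:] * monom 1 n"
  by (simp add: smult_monom)

definition PD0 :: "nat \<Rightarrow> nat \<Rightarrow> rat poly poly" where
  "PD0 w1 w2 = 1 - monom (monom 1 w1) w2"

lemma PD0_tensor: "PD0 w1 w2 = [:1:] * lift2 1 - [:monom 1 w1:] * lift2 (monom 1 w2)"
  by (simp only: pC1 lift2_1 lift2_monom mult_1 monom_M[symmetric] PD0_def)

lemma PD0_VID:
  assumes "even w1" "even w2"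
  shows "PD0 w1 w2 \<in> VID w1 w2"
proof -
  have "PD0 w1 w2 \<in> V2 w1 w2"
    unfolding PD0_tensor by (intro V2_diff V2_tensor) (auto simp: degree_monom_eq)
  moreover have "PD0 w1 w2 + act2 w1 w2 matS matS (PD0 w1 w2) = 0"
    unfolding PD0_tensor using assms
    by (simp only: act2_diff act2_tensor act_simps)
  moreover have "PD0 w1 w2 + act2 w1 w2 matU matU (PD0 w1 w2) + act2 w1 w2 matU2 matU2 (PD0 w1 w2) = 0"
    unfolding PD0_tensor using assms
    by (simp only: act2_diff act2_tensor act_simps)
  ultimately show ?thesis by (simp add: VID_def)
qed

lemma kernel:
  assumes ev: "even w1" "even w2" and w: "w1 \<ge> 1" "w2 \<ge> 1"
    and A: "A \<in> Ww w1" and Q: "Q \<in> Ww w2" and PD: "PD \<in> VID w1 w2"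
    and eq: "[:A:] - PD + [:monom 1 w1:] * lift2 Q = 0"
  shows "A = smult (coeff Q 0) (1 - monom 1 w1) \<and> Q = smult (coeff Q 0) (1 - monom 1 w2)
     \<and> PD = qscale (coeff Q 0) (PD0 w1 w2)"
proof -
  define c where "c = coeff Q 0"
  define M1 :: "rat poly" where "M1 = monom 1 w1"
  define M2 :: "rat poly" where "M2 = monom 1 w2"
  have PDe: "PD = [:A:] * lift2 1 + [:M1:] * lift2 Q"
    using eq unfolding M1_def by (simp add: algebra_simps)
  have SA: "act1 w1 matS A = - A" using A by (simp add: Ww_def eq_neg_iff_add_eq_0 add.commute)
  have SQ: "act1 w2 matS Q = - Q" using Q by (simp add: Ww_def eq_neg_iff_add_eq_0 add.commute)
  have "PD + act2 w1 w2 matS matS PD = 0" using PD by (simp add: VID_def)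
  then have E: "[:A:] * lift2 1 + [:M1:] * lift2 Q - [:A:] * lift2 M2 - [:1:] * lift2 Q = 0"
    unfolding PDe using ev
    by (simp only: act2_add act2_tensor act_simps SA SQ M1_def M2_def) (simp add: algebra_simps)
  have "coeff ([:A:] * lift2 1 + [:M1:] * lift2 Q - [:A:] * lift2 M2 - [:1:] * lift2 Q) 0 = 0"
    unfolding E by simp
  then have A0: "A = smult c (1 - M1)"
    using w unfolding c_def M2_def by (simp add: coeff_tensor coeff_1 coeff_monom algebra_simps)
  have e1: "[:smult c X:] = [:[:c:]:] * [:X:]" for X by simp
  have e2: "lift2 (smult c p) = [:[:c:]:] * lift2 p" for p by simp
  have e3: "[:1 - M1:] = 1 - [:M1:]" by (rule poly_eqI) (simp add: coeff_pCons coeff_1 split: nat.split)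
  have "[:1 - M1:] * (lift2 (smult c (1 - M2)) - lift2 Q)
     = [:A:] * lift2 1 + [:M1:] * lift2 Q - [:A:] * lift2 M2 - [:1:] * lift2 Q"
    unfolding A0 e1 e2 e3 lift2_diff lift2_1 pC1 by algebra
  then have "[:1 - M1:] * (lift2 (smult c (1 - M2)) - lift2 Q) = 0"
    using E by simp
  moreover have "[:1 - M1:] \<noteq> 0"
  proof
    assume "[:1 - M1:] = 0"
    then have "coeff (1 - M1) 0 = 0" by simp
    then show False using w unfolding M1_def by (simp add: coeff_monom)
  qed
  ultimately have "lift2 Q = lift2 (smult c (1 - M2))" by simp
  then have Q0: "Q = smult c (1 - M2)" by (rule lift2_inj)
  have "PD = qscale c (PD0 w1 w2)"
  proof -
    have qs: "qscale c X = [:[:c:]:] * X" for X by (simp add: qscale_def)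
    show ?thesis
      unfolding PDe A0 Q0 PD0_tensor qs e1 e2 e3 lift2_diff lift2_1 pC1 M1_def[symmetric] M2_def[symmetric]
      by algebra
  qed
  then show ?thesis using A0 Q0 unfolding c_def M1_def M2_def by simp
qed

lemma hom_h: "module_hom (smult :: rat \<Rightarrow> rat poly \<Rightarrow> rat poly) qscale (\<lambda>A. [:A:])"
  unfolding module_hom_iff using vsP vsQ
  by (auto simp: module_iff_vector_space qscale_def)

lemma hom_v: "module_hom (smult :: rat \<Rightarrow> rat poly \<Rightarrow> rat poly) qscale (\<lambda>Q. [:M:] * lift2 Q)"
  unfolding module_hom_iff using vsP vsQ
  by (auto simp: module_iff_vector_space qscale_def algebra_simps)

lemma inj_h: "inj (\<lambda>A::rat poly. [:A:])"
  by (auto intro: injI)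

lemma inj_v: "M \<noteq> 0 \<Longrightarrow> inj (\<lambda>Q. [:M:] * lift2 Q)"
  by (rule injI) (metis lift2_inj smult_diff_right smult_eq_0_iff eq_iff_diff_eq_0 pC_mult_lift2)

lemma subspace_W: "P.subspace (Ww w)"
  unfolding P.subspace_def using W_0 W_add W_smult by blast

lemma subspace_VID: "Q.subspace (VID w1 w2)"
  unfolding Q.subspace_def using VID_0 VID_add VID_qscale by blast

lemma Vw_span: "Vw w \<subseteq> P.span ((\<lambda>k. monom 1 k) ` {..w})"
proof
  fix p assume "p \<in> Vw w"
  then have d: "degree p \<le> w" by (simp add: Vw_def)
  have "(\<Sum>i\<le>degree p. monom (coeff p i) i) \<in> P.span ((\<lambda>k. monom 1 k) ` {..w})"
  proof (rule P.span_sum)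
    fix i assume "i \<in> {..degree p}"
    then have "monom 1 i \<in> (\<lambda>k. monom 1 k) ` {..w}" using d by auto
    then have "smult (coeff p i) (monom 1 i) \<in> P.span ((\<lambda>k. monom 1 k) ` {..w})"
      by (intro P.span_scale P.span_base)
    then show "monom (coeff p i) i \<in> P.span ((\<lambda>k. monom 1 k) ` {..w})" by (simp add: smult_monom)
  qed
  then show "p \<in> P.span ((\<lambda>k. monom 1 k) ` {..w})" by (simp add: poly_as_sum_of_monoms)
qed

lemma finite_P: "P.independent B \<Longrightarrow> B \<subseteq> Ww w \<Longrightarrow> finite B"
  using P.independent_span_bound[of "(\<lambda>k. monom 1 k) ` {..w}" B] Vw_span[of w]
  by (auto simp: Ww_def)

lemma V2_span: "V2 w1 w2 \<subseteq> Q.span ((\<lambda>(i,j). monom (monom 1 i) j) ` ({..w1} \<times> {..w2}))"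
proof
  let ?T = "(\<lambda>(i,j). monom (monom 1 i) j) ` ({..w1} \<times> {..w2})"
  fix P assume "P \<in> V2 w1 w2"
  then have d: "degree P \<le> w2" "\<And>j. degree (coeff P j) \<le> w1" by (auto simp: V2_def)
  have "(\<Sum>j\<le>degree P. monom (coeff P j) j) \<in> Q.span ?T"
  proof (rule Q.span_sum)
    fix j assume j: "j \<in> {..degree P}"
    have "monom (\<Sum>i\<le>degree (coeff P j). monom (coeff (coeff P j) i) i) j \<in> Q.span ?T"
      unfolding monom_sum
    proof (rule Q.span_sum)
      fix i assume i: "i \<in> {..degree (coeff P j)}"
      then have "monom (monom 1 i) j \<in> ?T" using d j
        by (intro image_eqI[where x="(i,j)"]) (auto intro: order_trans)
      then have "qscale (coeff (coeff P j) i) (monom (monom 1 i) j) \<in> Q.span ?T"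
        by (intro Q.span_scale Q.span_base)
      then show "monom (monom (coeff (coeff P j) i) i) j \<in> Q.span ?T"
        by (simp add: qscale_def smult_monom)
    qed
    then show "monom (coeff P j) j \<in> Q.span ?T" by (simp add: poly_as_sum_of_monoms)
  qed
  then show "P \<in> Q.span ?T" by (simp add: poly_as_sum_of_monoms)
qed

lemma finite_Q: "Q.independent B \<Longrightarrow> B \<subseteq> VID w1 w2 \<Longrightarrow> finite B"
  using Q.independent_span_bound[of "(\<lambda>(i,j). monom (monom 1 i) j) ` ({..w1} \<times> {..w2})" B] V2_span[of w1 w2]
  by (auto simp: VID_def)

lemma (in vector_space) indep_Un:
  assumes A: "independent A" and C: "independent C" and AC: "span A \<inter> span C \<subseteq> {0}"
  shows "independent (A \<union> C) \<and> A \<inter> C = {}"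
proof
  show "A \<inter> C = {}"
  proof (rule ccontr)
    assume "A \<inter> C \<noteq> {}"
    then obtain x where "x \<in> A" "x \<in> C" by auto
    then have "x = 0" using AC span_base by blast
    then show False using A \<open>x \<in> A\<close> dependent_zero by blast
  qed
  have key: "\<not> (a \<in> span ((X \<union> Y) - {a}))"
    if X: "independent X" "a \<in> X" and Y: "span X \<inter> span Y \<subseteq> {0}" "a \<notin> Y" for X Y a
  proof
    assume "a \<in> span ((X \<union> Y) - {a})"
    moreover have "(X \<union> Y) - {a} = (X - {a}) \<union> Y" using X Y by auto
    ultimately obtain x y where xy: "a = x + y" "x \<in> span (X - {a})" "y \<in> span Y"
      using span_Un by auto
    have "x \<in> span X" using xy(2) span_mono[of "X - {a}" X] by auto
    then have "y \<in> span X" using xy(1) span_diff[OF span_base[OF X(2)], of x] by (simp add: algebra_simps)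
    then have "y = 0" using Y xy(3) by auto
    then have "a \<in> span (X - {a})" using xy by simp
    then show False using X dependent_def by blast
  qed
  show "independent (A \<union> C)"
    unfolding dependent_def
  proof
    assume "\<exists>a\<in>A \<union> C. a \<in> span (A \<union> C - {a})"
    then obtain a where a: "a \<in> A \<union> C" "a \<in> span (A \<union> C - {a})" by blast
    have disj: "A \<inter> C = {}"
    proof (rule ccontr)
      assume "A \<inter> C \<noteq> {}"
      then obtain x where "x \<in> A" "x \<in> C" by auto
      then have "x = 0" using AC span_base by blast
      then show False using A \<open>x \<in> A\<close> dependent_zero by blast
    qed
    show False
    proof (cases "a \<in> A")
      case True
      then show False using key[OF A True AC] a disj by blast
    next
      case False
      then have "a \<in> C" using a by auto
      moreover have "span C \<inter> span A \<subseteq> {0}" using AC by auto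
      ultimately show False using key[OF C _ _ ] a False by (metis Un_commute)
    qed
  qed
qed

lemma qscale_pC: "qscale r [:X:] = [:smult r X:]"
  by (simp add: qscale_def)

lemma lift2_q0: "lift2 (1 - monom 1 w) = 1 - monom 1 w"
  by (simp add: pC1)

lemma pC_one_minus: "[:1 - M:] = 1 - [:M::rat poly:]"
  by (rule poly_eqI) (simp add: coeff_pCons coeff_1 split: nat.split)

lemma part1:
  "(\<lambda>(PH, PD, PV). PH - PD + PV) ` (WH w1 \<times> VID w1 w2 \<times> WV w1 w2) = Ew w1 w2"
proof
  show "(\<lambda>(PH, PD, PV). PH - PD + PV) ` (WH w1 \<times> VID w1 w2 \<times> WV w1 w2) \<subseteq> Ew w1 w2"
  proof clarify
    fix PH PD PV assume "PH \<in> WH w1" "PD \<in> VID w1 w2" "PV \<in> WV w1 w2"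
    then show "PH - PD + PV \<in> Ew w1 w2"
      unfolding Ew_def using VID_minus[of PD] by (force simp: algebra_simps)
  qed
  show "Ew w1 w2 \<subseteq> (\<lambda>(PH, PD, PV). PH - PD + PV) ` (WH w1 \<times> VID w1 w2 \<times> WV w1 w2)"
  proof
    fix x assume "x \<in> Ew w1 w2"
    then obtain PH PD PV where "x = PH + PD + PV" "PH \<in> WH w1" "PD \<in> VID w1 w2" "PV \<in> WV w1 w2"
      by (auto simp: Ew_def)
    then show "x \<in> (\<lambda>(PH, PD, PV). PH - PD + PV) ` (WH w1 \<times> VID w1 w2 \<times> WV w1 w2)"
      using VID_minus[of PD] by (intro image_eqI[where x="(PH, -PD, PV)"]) auto
  qed
qed

lemma part2:
  assumes ev: "even w1" "even w2" and w: "w1 \<ge> 1" "w2 \<ge> 1"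
  shows "{(PH, PD, PV). PH \<in> WH w1 \<and> PD \<in> VID w1 w2 \<and> PV \<in> WV w1 w2 \<and> PH - PD + PV = 0}
       = {(qscale r [:1 - monom 1 w1:],
           qscale r (1 - monom (monom 1 w1) w2),
           qscale r ([:monom 1 w1:] * (1 - monom 1 w2))) | r. True}"
proof (intro equalityI subsetI)
  fix x assume "x \<in> {(PH, PD, PV). PH \<in> WH w1 \<and> PD \<in> VID w1 w2 \<and> PV \<in> WV w1 w2 \<and> PH - PD + PV = 0}"
  then obtain PH PD PV where xe: "x = (PH, PD, PV)" and H: "PH \<in> WH w1" and D: "PD \<in> VID w1 w2" and V: "PV \<in> WV w1 w2"
    and eq: "PH - PD + PV = 0" by auto
  from H obtain A where A: "PH = [:A:]" "A \<in> Ww w1" by (auto simp: WH_def)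
  from V obtain Q where Q: "PV = [:monom 1 w1:] * lift2 Q" "Q \<in> Ww w2" by (auto simp: WV_def)
  from kernel[OF ev w A(2) Q(2) D] eq A Q
  have k: "A = smult (coeff Q 0) (1 - monom 1 w1)" "Q = smult (coeff Q 0) (1 - monom 1 w2)"
    "PD = qscale (coeff Q 0) (PD0 w1 w2)" by auto
  have "\<exists>r. (PH, PD, PV) = (qscale r [:1 - monom 1 w1:],
           qscale r (1 - monom (monom 1 w1) w2),
           qscale r ([:monom 1 w1:] * (1 - monom 1 w2)))"
  proof (intro exI[of _ "coeff Q 0"])
    have "PV = qscale (coeff Q 0) ([:monom 1 w1:] * (1 - monom 1 w2))"
      unfolding Q(1) by (subst k(2)) (simp add: qscale_def pC1)
    then show "(PH, PD, PV) = (qscale (coeff Q 0) [:1 - monom 1 w1:],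
           qscale (coeff Q 0) (1 - monom (monom 1 w1) w2),
           qscale (coeff Q 0) ([:monom 1 w1:] * (1 - monom 1 w2)))"
      using k A by (simp add: qscale_pC PD0_def)
  qed
  then show "x \<in> {(qscale r [:1 - monom 1 w1:],
           qscale r (1 - monom (monom 1 w1) w2),
           qscale r ([:monom 1 w1:] * (1 - monom 1 w2))) | r. True}" using xe by auto
next
  fix x assume "x \<in> {(qscale r [:1 - monom 1 w1:],
           qscale r (1 - monom (monom 1 w1) w2),
           qscale r ([:monom 1 w1:] * (1 - monom 1 w2))) | r. True}"
  then obtain r where xe: "x = (qscale r [:1 - monom 1 w1:],
           qscale r (1 - monom (monom 1 w1) w2),
           qscale r ([:monom 1 w1:] * (1 - monom 1 w2)))" by auto
  have "qscale r [:1 - monom 1 w1:] \<in> WH w1"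
    unfolding qscale_pC WH_def using W_smult[OF q0_in_W[OF ev(1) w(1)]] by blast
  moreover have VD: "qscale r (1 - monom (monom 1 w1) w2) \<in> VID w1 w2"
    using VID_qscale[OF PD0_VID[OF ev]] by (simp add: PD0_def)
  have "qscale r ([:monom 1 w1:] * (1 - monom 1 w2)) = [:monom 1 w1:] * lift2 (smult r (1 - monom 1 w2))"
    by (simp add: qscale_def pC1)
  then have "qscale r ([:monom 1 w1:] * (1 - monom 1 w2)) \<in> WV w1 w2"
    unfolding WV_def using W_smult[OF q0_in_W[OF ev(2) w(2)]] by blast
  moreover have "qscale r [:1 - monom 1 w1:] - qscale r (1 - monom (monom 1 w1) w2) +
        qscale r ([:monom 1 w1:] * (1 - monom 1 w2)) = 0"
  proof -
    have "[:1 - monom 1 w1:] - (1 - monom (monom 1 w1) w2) + [:monom 1 w1:] * (1 - monom 1 w2) = (0 :: rat poly poly)"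
      unfolding pC_one_minus monom_M[of "monom 1 w1"] by algebra
    then show ?thesis by (simp flip: Q.scale_right_distrib Q.scale_right_diff_distrib)
  qed
  ultimately show "x \<in> {(PH, PD, PV). PH \<in> WH w1 \<and> PD \<in> VID w1 w2 \<and> PV \<in> WV w1 w2 \<and> PH - PD + PV = 0}"
    using xe VD by auto
qed

lemma part3:
  assumes ev: "even w1" "even w2" and w: "w1 \<ge> 1" "w2 \<ge> 1"
  shows "int (Q.dim (Ew w1 w2)) = int (P.dim (Ww w1)) + int (Q.dim (VID w1 w2)) + int (P.dim (Ww w2)) - 1"
proof -
  define M1 :: "rat poly" where "M1 = monom 1 w1"
  define q0 :: "rat poly" where "q0 = 1 - monom 1 w2"
  define h :: "rat poly \<Rightarrow> rat poly poly" where "h = (\<lambda>A. [:A:])"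
  define v :: "rat poly \<Rightarrow> rat poly poly" where "v = (\<lambda>Q. [:M1:] * lift2 Q)"
  have hh: "module_hom smult qscale h" unfolding h_def by (rule hom_h)
  have hv: "module_hom smult qscale v" unfolding v_def by (rule hom_v)
  have M1nz: "M1 \<noteq> 0" unfolding M1_def by simp
  have injh: "inj h" unfolding h_def by (rule inj_h)
  have injv: "inj v" unfolding v_def by (rule inj_v[OF M1nz])
  have v0: "v 0 = 0" by (simp add: v_def)
  have q0W: "q0 \<in> Ww w2" unfolding q0_def by (rule q0_in_W[OF ev(2) w(2)])
  have q0nz: "q0 \<noteq> 0"
  proof
    assume "q0 = 0"
    then have "coeff q0 0 = 0" by simp
    then show False using w unfolding q0_def by (simp add: coeff_monom)
  qed
  obtain B1 where B1: "B1 \<subseteq> Ww w1" "P.independent B1" "Ww w1 \<subseteq> P.span B1" "card B1 = P.dim (Ww w1)"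
    by (rule P.basis_exists)
  have finB1: "finite B1" using finite_P B1 by blast
  have spanB1: "P.span B1 = Ww w1" using P.span_subspace[OF B1(1) B1(3) subspace_W] .
  obtain B2 where B2: "{q0} \<subseteq> B2" "B2 \<subseteq> Ww w2" "P.independent B2" "Ww w2 \<subseteq> P.span B2"
    using P.maximal_independent_subset_extend[of "{q0}" "Ww w2"] q0W q0nz by auto
  have cardB2: "card B2 = P.dim (Ww w2)" using P.basis_card_eq_dim[OF B2(2) B2(4) B2(3)] .
  have finB2: "finite B2" using finite_P B2 by blast
  have spanB2: "P.span B2 = Ww w2" using P.span_subspace[OF B2(2) B2(4) subspace_W] .
  have q0B2: "q0 \<in> B2" using B2 by auto
  obtain B where B: "B \<subseteq> VID w1 w2" "Q.independent B" "VID w1 w2 \<subseteq> Q.span B" "card B = Q.dim (VID w1 w2)"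
    by (rule Q.basis_exists)
  have finB: "finite B" using finite_Q B by blast
  have spanB: "Q.span B = VID w1 w2" using Q.span_subspace[OF B(1) B(3) subspace_VID] .
  define H where "H = h ` B1"
  define G where "G = v ` (B2 - {q0})"
  have indH: "Q.independent H" unfolding H_def
    using module_hom.independent_inj_image[OF hh B1(2) injh] .
  have indG: "Q.independent G" unfolding G_def
    using module_hom.independent_inj_image[OF hv P.independent_mono[OF B2(3)] injv] by blast
  have WH_eq: "WH w1 = h ` Ww w1" by (auto simp: WH_def h_def)
  have spanH: "Q.span H = WH w1"
    unfolding H_def module_hom.span_image[OF hh] spanB1 WH_eq ..
  have spanG: "Q.span G = v ` P.span (B2 - {q0})"
    unfolding G_def module_hom.span_image[OF hv] ..
  have cardH: "card H = card B1" unfolding H_def by (rule card_image) (use injh in \<open>auto simp: inj_on_def\<close>)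
  have cardG: "card G = card B2 - 1" unfolding G_def
    by (subst card_image) (use injv q0B2 finB2 in \<open>auto simp: inj_on_def\<close>)
  have finH: "finite H" "finite G" using finB1 finB2 unfolding H_def G_def by auto
  have int1: "Q.span H \<inter> Q.span B \<subseteq> {0}"
  proof
    fix x assume "x \<in> Q.span H \<inter> Q.span B"
    then have x: "x \<in> WH w1" "x \<in> VID w1 w2" using spanH spanB by auto
    then obtain A where A: "x = [:A:]" "A \<in> Ww w1" by (auto simp: WH_def)
    have "[:A:] - x + [:monom 1 w1:] * lift2 0 = 0" using A by simp
    from kernel[OF ev w A(2) W_0 x(2) this] show "x \<in> {0}" by (simp add: qscale_def)
  qed
  have HB: "Q.independent (H \<union> B)" "H \<inter> B = {}" using Q.indep_Un[OF indH B(2) int1] by auto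
  have int2: "Q.span (H \<union> B) \<inter> Q.span G \<subseteq> {0}"
  proof
    fix x assume "x \<in> Q.span (H \<union> B) \<inter> Q.span G"
    then obtain a b where ab: "x = a + b" "a \<in> WH w1" "b \<in> VID w1 w2" and xG: "x \<in> Q.span G"
      using spanH spanB Q.span_Un by auto
    from xG spanG obtain Q' where Q': "x = v Q'" "Q' \<in> P.span (B2 - {q0})" by auto
    have Q'W: "Q' \<in> Ww w2" using Q'(2) P.span_mono[of "B2 - {q0}" B2] spanB2 by auto
    from ab obtain A where A: "a = [:A:]" "A \<in> Ww w1" by (auto simp: WH_def)
    have "v (- Q') = - v Q'" by (simp add: v_def)
    then have eq: "[:A:] - (- b) + [:monom 1 w1:] * lift2 (- Q') = 0"
      using ab Q'(1) A by (simp add: v_def M1_def)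
    define c where "c = coeff (- Q') 0"
    from kernel[OF ev w A(2) W_minus[OF Q'W] VID_minus[OF ab(3)] eq]
    have Qc: "- Q' = smult c q0" unfolding c_def q0_def by blast
    have "c = 0"
    proof (rule ccontr)
      assume "c \<noteq> 0"
      then have "q0 = smult (- inverse c) Q'" using Qc
        by (metis P.scale_minus_left P.scale_scale P.scale_one right_inverse minus_minus mult.commute)
      moreover have "smult (- inverse c) Q' \<in> P.span (B2 - {q0})" using Q'(2) by (rule P.span_scale)
      ultimately have "q0 \<in> P.span (B2 - {q0})" by simp
      then show False using B2(3) q0B2 P.dependent_def by blast
    qed
    then have "Q' = 0" using Qc by simp
    then show "x \<in> {0}" using Q'(1) v0 by simp
  qed
  have HBG: "Q.independent (H \<union> B \<union> G)" "(H \<union> B) \<inter> G = {}"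
    using Q.indep_Un[OF HB(1) indG int2] by auto
  have cardT: "card (H \<union> B \<union> G) = card B1 + card B + (card B2 - 1)"
    using HB(2) HBG(2) finH finB cardH cardG by (simp add: card_Un_disjoint)
  have WV_eq: "WV w1 w2 = v ` Ww w2" by (auto simp: WV_def v_def M1_def)
  have T_sub: "H \<union> B \<union> G \<subseteq> Ew w1 w2"
  proof -
    have z1: "0 \<in> WH w1" using W_0 by (force simp: WH_def)
    have z3: "0 \<in> WV w1 w2" unfolding WV_eq using W_0 v0 by force
    have "H \<subseteq> WH w1" using B1(1) spanH Q.span_superset by blast
    moreover have "G \<subseteq> WV w1 w2" unfolding G_def WV_eq using B2(2) by auto
    ultimately show ?thesis
    proof (intro subsetI)
      fix x assume HW: "H \<subseteq> WH w1" and GW: "G \<subseteq> WV w1 w2" and x: "x \<in> H \<union> B \<union> G"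
      have e1: "x \<in> H \<Longrightarrow> x \<in> Ew w1 w2" unfolding Ew_def using HW VID_0 z3
        by (intro CollectI exI[of _ x] exI[of _ 0]) auto
      have e2: "x \<in> B \<Longrightarrow> x \<in> Ew w1 w2" unfolding Ew_def using B(1) z1 z3
        by (intro CollectI exI[of _ 0] exI[of _ x]) auto
      have e3: "x \<in> G \<Longrightarrow> x \<in> Ew w1 w2" unfolding Ew_def using GW z1 VID_0
        by (intro CollectI exI[of _ 0] exI[of _ x]) auto
      show "x \<in> Ew w1 w2" using x e1 e2 e3 by blast
    qed
  qed
  have span_T: "Ew w1 w2 \<subseteq> Q.span (H \<union> B \<union> G)"
  proof
    let ?S = "Q.span (H \<union> B \<union> G)"
    fix x assume "x \<in> Ew w1 w2"
    then obtain PH PD PV where x: "x = PH + PD + PV" "PH \<in> WH w1" "PD \<in> VID w1 w2" "PV \<in> WV w1 w2"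
      by (auto simp: Ew_def)
    have HS: "WH w1 \<subseteq> ?S" using spanH Q.span_mono[of H "H \<union> B \<union> G"] by auto
    have BS: "VID w1 w2 \<subseteq> ?S" using spanB Q.span_mono[of B "H \<union> B \<union> G"] by auto
    have GS: "Q.span G \<subseteq> ?S" using Q.span_mono[of G "H \<union> B \<union> G"] by auto
    from x(4) obtain Qv where Qv: "PV = v Qv" "Qv \<in> Ww w2" unfolding WV_eq by auto
    have "Qv \<in> P.span (insert q0 (B2 - {q0}))" using Qv(2) spanB2 q0B2 by (simp add: insert_absorb)
    then obtain k where k: "Qv - smult k q0 \<in> P.span (B2 - {q0})" using P.span_breakdown_eq by blast
    have "v (Qv - smult k q0) \<in> ?S" using k spanG GS by auto
    moreover have "v q0 = PD0 w1 w2 - [:1 - M1:]"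
      unfolding v_def q0_def PD0_tensor lift2_diff lift2_1 pC_one_minus M1_def pC1 by algebra
    then have "v q0 \<in> ?S"
      using BS HS PD0_VID[OF ev] q0_in_W[OF ev(1) w(1)] unfolding WH_def M1_def
      by (auto intro!: Q.span_diff)
    then have "qscale k (v q0) \<in> ?S" by (rule Q.span_scale)
    moreover have "PV = v (Qv - smult k q0) + qscale k (v q0)"
      using Qv(1) module_hom.diff[OF hv] module_hom.scale[OF hv] by simp
    ultimately have "PV \<in> ?S" by (simp add: Q.span_add)
    then show "x \<in> ?S" using x HS BS by (auto intro!: Q.span_add)
  qed
  have "card (H \<union> B \<union> G) = Q.dim (Ew w1 w2)"
    by (rule Q.basis_card_eq_dim[OF T_sub span_T HBG(1)])
  moreover have "card B2 \<ge> 1" using q0B2 finB2 by (metis One_nat_def Suc_leI card_gt_0_iff empty_iff)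
  ultimately show ?thesis using cardT B1(4) B(4) cardB2 by simp
qed

theorem proposition19:
  fixes w1 w2 :: nat
  assumes "even w1" and "even w2" and "w1 \<ge> 2" and "w2 \<ge> 2"
  shows "(\<lambda>(PH, PD, PV). PH - PD + PV) ` (WH w1 \<times> VID w1 w2 \<times> WV w1 w2) = Ew w1 w2
    \<and> {(PH, PD, PV). PH \<in> WH w1 \<and> PD \<in> VID w1 w2 \<and> PV \<in> WV w1 w2 \<and> PH - PD + PV = 0}
       = {(qscale r [:1 - monom 1 w1:],
           qscale r (1 - monom (monom 1 w1) w2),
           qscale r ([:monom 1 w1:] * (1 - monom 1 w2))) | r. True}
    \<and> int (vector_space.dim qscale (Ew w1 w2))
       = int (vector_space.dim (smult :: rat \<Rightarrow> rat poly \<Rightarrow> rat poly) (Ww w1))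
         + int (vector_space.dim qscale (VID w1 w2))
         + int (vector_space.dim (smult :: rat \<Rightarrow> rat poly \<Rightarrow> rat poly) (Ww w2)) - 1"
proof -
  have w: "w1 \<ge> 1" "w2 \<ge> 1" using assms by auto
  show ?thesis
    using part1[of w1 w2] part2[OF assms(1,2) w] part3[OF assms(1,2) w] by blast
qed

end
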